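(* Let $G$ be a group with finite generating set $S$, let $\Gamma=Cay(G,S)$, and let $k,m>0$. Then $\Gamma$ is $\varepsilon$-densely $(k,m)$-chordal for some $\varepsilon>0$ if and only if $G$ is $(i_0,k,m)$-chordal with respect to $S$ for some $i_0>0$.
   Context: $S^{\pm1}=S\cup S^{-1}\setminus\{e\}$; $Cay(G,S)$ has vertex set $G$, edges $\{g,gs\}$ ($s\in S^{\pm1}$), each edge isometric to $[0,1]$. A cycle in a graph is a simple closed path (of length at least 3); $L(\cdot)$ denotes length and $d_\gamma$ the length metric on the cycle $\gamma$. A shortcut in $\gamma$ is a path $\sigma$ joining vertices $p,q$ of $\gamma$ with $L(\sigma)<d_\gamma(p,q)$; it is strict if $\sigma\cap\gamma=\{p,q\}$, and then $p,q$ are its associated shortcut vertices. A graph is $\varepsilon$-densely $(k,m)$-chordal if for every cycle $\gamma$ with $L(\gamma)\ge k$ there are strict shortcuts $\sigma_1,\dots,\sigma_r$ with $L(\sigma_i)\le m$ whose associated shortcut vertices form an $\varepsilon$-dense subset of $(\gamma,d_\gamma)$ (every point of $\gamma$ is at $d_\gamma$-distance $<\varepsilon$ from one of them). A relation $s_1\cdots s_n=e$ with $n>2$, $s_i\in S^{\pm1}$, is simple if $s_ps_{p+1}\cdots s_q=e$ holds exactly when $(p,q)=(1,n)$. $G$ is $(i_0,k,m)$-chordal with respect to $S$ if for every simple relation $s_1\cdots s_n=e$ with $n\ge k$ there exist $1\le i\le i_0$, $i<j\le n$ and $s'_1,\dots,s'_r\in S^{\pm1}$ with $s_i\cdots s_j=s'_1\cdots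 s'_r$ and $r\le\min\{m,\,j-i,\,n-j+i-2\}$. *)

theory Defs
  imports Complex_Main "HOL-Algebra.Group" "HOL-Algebra.Generated_Groups"
begin

definition sym_gens :: "('a, 'b) monoid_scheme \<Rightarrow> 'a set \<Rightarrow> 'a set" where
  "sym_gens G S = (S \<union> (\<lambda>s. inv\<^bsub>G\<^esub> s) ` S) - {\<one>\<^bsub>G\<^esub>}"

definition cay_adj :: "('a, 'b) monoid_scheme \<Rightarrow> 'a set \<Rightarrow> 'a \<Rightarrow> 'a \<Rightarrow> bool" where
  "cay_adj G S g h \<longleftrightarrow> g \<in> carrier G \<and> (\<exists>s \<in> sym_gens G S. h = g \<otimes>\<^bsub>G\<^esub> s)"

definition cay_cycle :: "('a, 'b) monoid_scheme \<Rightarrow> 'a set \<Rightarrow> 'a list \<Rightarrow> bool" where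
  "cay_cycle G S cs \<longleftrightarrow> length cs \<ge> 3 \<and> distinct cs \<and>
     (\<forall>i < length cs. cay_adj G S (cs ! i) (cs ! ((i + 1) mod length cs)))"

text \<open>An edge path (walk) in the Cayley graph, given by its vertex list; its length is
  the number of edges, i.e. length ws - 1.\<close>
definition cay_walk :: "('a, 'b) monoid_scheme \<Rightarrow> 'a set \<Rightarrow> 'a list \<Rightarrow> bool" where
  "cay_walk G S ws \<longleftrightarrow> ws \<noteq> [] \<and> hd ws \<in> carrier G \<and>
     (\<forall>i. i + 1 < length ws \<longrightarrow> cay_adj G S (ws ! i) (ws ! (i + 1)))"

text \<open>The length metric on a cycle of length n, whose points are parametrised by
  t \<in> [0,n), vertex number i sitting at parameter i.\<close>
definition cyc_dist :: "nat \<Rightarrow> real \<Rightarrow> real \<Rightarrow> real" where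
  "cyc_dist n s t = min \<bar>s - t\<bar> (real n - \<bar>s - t\<bar>)"

definition strict_shortcut ::
  "('a, 'b) monoid_scheme \<Rightarrow> 'a set \<Rightarrow> 'a list \<Rightarrow> nat \<Rightarrow> nat \<Rightarrow> 'a list \<Rightarrow> bool" where
  "strict_shortcut G S cs i j ws \<longleftrightarrow>
     i < length cs \<and> j < length cs \<and> cay_walk G S ws \<and>
     hd ws = cs ! i \<and> last ws = cs ! j \<and>
     real (length ws - 1) < cyc_dist (length cs) (real i) (real j) \<and>
     (\<forall>l. 0 < l \<and> l + 1 < length ws \<longrightarrow> ws ! l \<notin> set cs - {cs ! i, cs ! j})"

definition dense_chordal ::
  "('a, 'b) monoid_scheme \<Rightarrow> 'a set \<Rightarrow> real \<Rightarrow> nat \<Rightarrow> nat \<Rightarrow> bool" where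
  "dense_chordal G S \<epsilon> k m \<longleftrightarrow>
     (\<forall>cs. cay_cycle G S cs \<and> length cs \<ge> k \<longrightarrow>
        (\<forall>t::real. 0 \<le> t \<and> t < real (length cs) \<longrightarrow>
           (\<exists>i j ws. strict_shortcut G S cs i j ws \<and> length ws - 1 \<le> m \<and>
              (cyc_dist (length cs) t (real i) < \<epsilon> \<or> cyc_dist (length cs) t (real j) < \<epsilon>))))"

definition word_prod :: "('a, 'b) monoid_scheme \<Rightarrow> 'a list \<Rightarrow> 'a" where
  "word_prod G ws = foldr (\<lambda>x y. x \<otimes>\<^bsub>G\<^esub> y) ws \<one>\<^bsub>G\<^esub>"

text \<open>Subword s_p ... s_q (1-based, inclusive).\<close>
definition subword :: "'a list \<Rightarrow> nat \<Rightarrow> nat \<Rightarrow> 'a list" where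
  "subword ws p q = take (q + 1 - p) (drop (p - 1) ws)"

definition simple_relation :: "('a, 'b) monoid_scheme \<Rightarrow> 'a set \<Rightarrow> 'a list \<Rightarrow> bool" where
  "simple_relation G S ss \<longleftrightarrow> length ss > 2 \<and> set ss \<subseteq> sym_gens G S \<and>
     (\<forall>p q. 1 \<le> p \<and> p \<le> q \<and> q \<le> length ss \<longrightarrow>
        (word_prod G (subword ss p q) = \<one>\<^bsub>G\<^esub> \<longleftrightarrow> (p = 1 \<and> q = length ss)))"

definition group_chordal ::
  "('a, 'b) monoid_scheme \<Rightarrow> 'a set \<Rightarrow> nat \<Rightarrow> nat \<Rightarrow> nat \<Rightarrow> bool" where
  "group_chordal G S i0 k m \<longleftrightarrow>
     (\<forall>ss. simple_relation G S ss \<and> length ss \<ge> k \<longrightarrow>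
        (\<exists>i j ss'. 1 \<le> i \<and> i \<le> i0 \<and> i < j \<and> j \<le> length ss \<and>
           set ss' \<subseteq> sym_gens G S \<and>
           word_prod G (subword ss i j) = word_prod G ss' \<and>
           length ss' \<le> m \<and> length ss' \<le> j - i \<and>
           int (length ss') \<le> int (length ss) - int j + int i - 2))"

end

theory Submission
  imports Defs
begin


lemma cyc_dist_sym: "cyc_dist n s t = cyc_dist n t s"
  unfolding cyc_dist_def by (simp add: abs_minus_commute)

lemma cyc_dist_tri:
  assumes "0 \<le> x" "x < real n" "0 \<le> y" "y < real n" "0 \<le> z" "z < real n"
  shows "cyc_dist n x z \<le> cyc_dist n x y + cyc_dist n y z"
  using assms unfolding cyc_dist_def min_def by (auto split: if_splits simp: abs_if)

lemma cyc_dist_le_abs: "cyc_dist n s t \<le> \<bar>s - t\<bar>"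
  unfolding cyc_dist_def by simp

lemma cyc_dist_self: "cyc_dist n s s = 0"
  unfolding cyc_dist_def by simp

lemma cyc_dist_rot:
  assumes "D < n"
  shows "cyc_dist n (real ((r + x) mod n)) (real ((r + x + D) mod n)) = real (min D (n - D))"
proof -
  define A where "A = (r + x) mod n"
  have An: "A < n" using assms A_def by simp
  have B: "(r + x + D) mod n = (A + D) mod n" unfolding A_def by (simp add: mod_add_left_eq)
  show ?thesis
  proof (cases "A + D < n")
    case True
    then show ?thesis using B unfolding cyc_dist_def A_def[symmetric]
      by (auto simp: min_def)
  next
    case False
    then have "(A + D) mod n = A + D - n" using An assms
      by (simp add: le_mod_geq)
    then show ?thesis using B False An assms unfolding cyc_dist_def A_def[symmetric]
      by (auto simp: min_def of_nat_diff)
  qed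
qed




context group begin

lemma sym_gens_carrier: "S \<subseteq> carrier G \<Longrightarrow> sym_gens G S \<subseteq> carrier G"
  unfolding sym_gens_def by auto

lemma sym_gens_inv: "S \<subseteq> carrier G \<Longrightarrow> s \<in> sym_gens G S \<Longrightarrow> inv s \<in> sym_gens G S"
  unfolding sym_gens_def by (auto simp: subset_iff)

lemma word_prod_carrier: "set xs \<subseteq> carrier G \<Longrightarrow> word_prod G xs \<in> carrier G"
  unfolding word_prod_def by (induction xs) auto

lemma word_prod_append: "set xs \<subseteq> carrier G \<Longrightarrow> set ys \<subseteq> carrier G \<Longrightarrow>
   word_prod G (xs @ ys) = word_prod G xs \<otimes> word_prod G ys"
proof (induction xs)
  case Nil then show ?case using word_prod_carrier by (simp add: word_prod_def)
next
  case (Cons x xs)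
  then show ?case using word_prod_carrier[of xs] word_prod_carrier[of ys]
    by (simp add: word_prod_def m_assoc)
qed

lemma telescope:
  assumes "\<And>l. f l \<in> carrier G" "a \<le> b"
  shows "word_prod G (map (\<lambda>l. inv (f l) \<otimes> f (Suc l)) [a..<b]) = inv (f a) \<otimes> f b"
  using assms(2)
proof (induction b)
  case 0 then show ?case using assms(1) by (simp add: word_prod_def)
next
  case (Suc b)
  show ?case
  proof (cases "a = Suc b")
    case True then show ?thesis using assms(1) by (simp add: word_prod_def)
  next
    case False
    then have ab: "a \<le> b" using Suc by simp
    have "word_prod G (map (\<lambda>l. inv (f l) \<otimes> f (Suc l)) [a..<Suc b])
       = word_prod G (map (\<lambda>l. inv (f l) \<otimes> f (Suc l)) [a..<b]) \<otimes> word_prod G [inv (f b) \<otimes> f (Suc b)]"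
      using ab by simp (rule word_prod_append; use assms(1) in auto)
    also have "\<dots> = (inv (f a) \<otimes> f b) \<otimes> (inv (f b) \<otimes> f (Suc b))"
      using Suc.IH ab assms(1) by (simp add: word_prod_def)
    also have "\<dots> = inv (f a) \<otimes> f (Suc b)"
      using assms(1) by (simp add: m_assoc[symmetric]) (simp add: m_assoc)
    finally show ?thesis .
  qed
qed

lemma walk_carrier: "cay_walk G S ws \<Longrightarrow> S \<subseteq> carrier G \<Longrightarrow> set ws \<subseteq> carrier G"
proof -
  assume w: "cay_walk G S ws" and S: "S \<subseteq> carrier G"
  have "\<forall>i < length ws. ws ! i \<in> carrier G"
  proof (intro allI impI)
    fix i assume "i < length ws"
    then show "ws ! i \<in> carrier G"
    proof (induction i)
      case 0 then show ?case using w by (simp add: cay_walk_def hd_conv_nth)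
    next
      case (Suc i)
      then have "cay_adj G S (ws ! i) (ws ! (i+1))" using w by (simp add: cay_walk_def)
      then show ?case using sym_gens_carrier[OF S] unfolding cay_adj_def by auto
    qed
  qed
  then show ?thesis by (auto simp: in_set_conv_nth)
qed

definition labels where
  "labels ws = map (\<lambda>l. inv (ws ! l) \<otimes> ws ! (Suc l)) [0..<length ws - 1]"

lemma labels_prop:
  assumes w: "cay_walk G S ws" and S: "S \<subseteq> carrier G"
  shows "set (labels ws) \<subseteq> sym_gens G S" "length (labels ws) = length ws - 1"
    "word_prod G (labels ws) = inv (hd ws) \<otimes> last ws"
proof -
  have c: "set ws \<subseteq> carrier G" using walk_carrier[OF w S] .
  show "set (labels ws) \<subseteq> sym_gens G S"
  proof
    fix x assume "x \<in> set (labels ws)"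
    then obtain l where l: "l < length ws - 1" "x = inv (ws ! l) \<otimes> ws ! (Suc l)"
      unfolding labels_def by auto
    then have "cay_adj G S (ws ! l) (ws ! (l+1))" using w by (simp add: cay_walk_def)
    then obtain s where s: "s \<in> sym_gens G S" "ws ! (l+1) = ws ! l \<otimes> s"
      unfolding cay_adj_def by auto
    have "ws ! l \<in> carrier G" using c l by (auto simp: subset_iff)
    moreover have "s \<in> carrier G" using s sym_gens_carrier[OF S] by auto
    ultimately have "x = s" using l s by (simp add: m_assoc[symmetric])
    then show "x \<in> sym_gens G S" using s by simp
  qed
  show "length (labels ws) = length ws - 1" unfolding labels_def by simp
  define f where "f l = (if l < length ws then ws ! l else \<one>)" for l
  have fc: "f l \<in> carrier G" for l using c unfolding f_def by (auto simp: subset_iff)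
  have ne: "ws \<noteq> []" using w by (simp add: cay_walk_def)
  have "labels ws = map (\<lambda>l. inv (f l) \<otimes> f (Suc l)) [0..<length ws - 1]"
    unfolding labels_def f_def by (rule map_cong) auto
  then have "word_prod G (labels ws) = inv (f 0) \<otimes> f (length ws - 1)"
    using telescope[of f 0 "length ws - 1"] fc by simp
  then show "word_prod G (labels ws) = inv (hd ws) \<otimes> last ws"
    using ne by (simp add: f_def hd_conv_nth last_conv_nth)
qed

lemma rev_walk:
  assumes w: "cay_walk G S ws" and S: "S \<subseteq> carrier G"
  shows "cay_walk G S (rev ws)"
proof -
  have c: "set ws \<subseteq> carrier G" using walk_carrier[OF w S] .
  have ne: "ws \<noteq> []" using w by (simp add: cay_walk_def)
  have "cay_adj G S (rev ws ! i) (rev ws ! (i + 1))" if "i + 1 < length ws" for i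
  proof -
    define j where "j = length ws - i - 2"
    have j: "j + 1 < length ws" "rev ws ! i = ws ! (j+1)" "rev ws ! (i+1) = ws ! j"
      using that unfolding j_def by (auto simp: rev_nth Suc_diff_Suc numeral_2_eq_2)
    then have "cay_adj G S (ws ! j) (ws ! (j+1))" using w by (simp add: cay_walk_def)
    then obtain s where s: "s \<in> sym_gens G S" "ws ! (j+1) = ws ! j \<otimes> s"
      unfolding cay_adj_def by auto
    have wj: "ws ! j \<in> carrier G" "ws ! (j+1) \<in> carrier G" using c j by (auto simp: subset_iff)
    have sc: "s \<in> carrier G" using s sym_gens_carrier[OF S] by auto
    have "ws ! j = ws ! (j+1) \<otimes> inv s" using s wj sc by (simp add: m_assoc)
    then show ?thesis unfolding cay_adj_def using j wj sym_gens_inv[OF S s(1)] by auto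
  qed
  moreover have "hd (rev ws) \<in> carrier G" using c ne last_in_set by (auto simp: hd_rev)
  ultimately show ?thesis using ne unfolding cay_walk_def by auto
qed

end




context group begin

lemma take_walk: "cay_walk G S ws \<Longrightarrow> 0 < q \<Longrightarrow> cay_walk G S (take q ws)"
  unfolding cay_walk_def by auto

lemma drop_walk: "cay_walk G S ws \<Longrightarrow> S \<subseteq> carrier G \<Longrightarrow> q < length ws \<Longrightarrow> cay_walk G S (drop q ws)"
  using walk_carrier[of S ws] unfolding cay_walk_def
  by (auto simp: hd_drop_conv_nth add.commute add.left_commute)

lemma extract_sc:
  assumes S: "S \<subseteq> carrier G" and dc: "distinct cs"
  shows "cay_walk G S ws \<Longrightarrow> a < length cs \<Longrightarrow> b < length cs \<Longrightarrow> hd ws = cs ! a \<Longrightarrow>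
    last ws = cs ! b \<Longrightarrow> real (length ws - 1) < cyc_dist (length cs) a b \<Longrightarrow>
    \<exists>a' b' ws'. strict_shortcut G S cs a' b' ws' \<and>
       cyc_dist (length cs) a a' + real (length ws' - 1) \<le> real (length ws - 1)"
proof (induction "length ws" arbitrary: ws a rule: less_induct)
  case less
  let ?n = "length cs"
  have ne: "ws \<noteq> []" using less.prems by (simp add: cay_walk_def)
  have len2: "length ws \<ge> 2"
  proof (rule ccontr)
    assume "\<not> 2 \<le> length ws"
    then have "length ws = 1" using ne by (cases ws) (auto simp: Suc_le_eq)
    then have "hd ws = last ws" using ne by (cases ws) auto
    then have "a = b" using less.prems dc by (simp add: nth_eq_iff_index_eq)
    then show False using less.prems by (simp add: cyc_dist_self)
  qed
  define P where "P l \<longleftrightarrow> 0 < l \<and> l < length ws \<and> ws ! l \<in> set cs" for l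
  have "ws ! (length ws - 1) = cs ! b" using less.prems(5) ne by (metis last_conv_nth)
  then have P1: "P (length ws - 1)" using len2 less.prems ne unfolding P_def
    by auto
  define q where "q = (LEAST l. P l)"
  have Pq: "P q" unfolding q_def using P1 by (rule LeastI)
  have qmin: "\<And>l. 0 < l \<Longrightarrow> l < q \<Longrightarrow> ws ! l \<notin> set cs"
  proof -
    fix l assume "0 < l" "l < q"
    then have "\<not> P l" unfolding q_def using not_less_Least by blast
    moreover have "l < length ws" using \<open>l < q\<close> Pq unfolding P_def by simp
    ultimately show "ws ! l \<notin> set cs" using \<open>0 < l\<close> unfolding P_def by simp
  qed
  obtain c where c: "c < ?n" "ws ! q = cs ! c" using Pq unfolding P_def by (auto simp: in_set_conv_nth)
  have q: "0 < q" "q < length ws" using Pq unfolding P_def by auto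
  show ?case
  proof (cases "real q < cyc_dist ?n a c")
    case True
    define ws' where "ws' = take (q + 1) ws"
    have "strict_shortcut G S cs a c ws'"
      unfolding strict_shortcut_def
    proof (intro conjI allI impI)
      show "a < ?n" "c < ?n" using less.prems c by auto
      show "cay_walk G S ws'" unfolding ws'_def using take_walk less.prems by simp
      show "hd ws' = cs ! a" unfolding ws'_def using less.prems ne by (simp add: hd_take)
      show "last ws' = cs ! c" unfolding ws'_def using q c by (simp add: take_Suc_conv_app_nth)
      show "real (length ws' - 1) < cyc_dist ?n (real a) (real c)"
        unfolding ws'_def using q True by simp
      fix l assume "0 < l \<and> l + 1 < length ws'"
      then show "ws' ! l \<notin> set cs - {cs ! a, cs ! c}" unfolding ws'_def using qmin q by simp
    qed
    moreover have "cyc_dist ?n a a + real (length ws' - 1) \<le> real (length ws - 1)"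
      unfolding ws'_def using q by (simp add: cyc_dist_self)
    ultimately show ?thesis by blast
  next
    case False
    define ws2 where "ws2 = drop q ws"
    have w2: "cay_walk G S ws2" unfolding ws2_def using drop_walk less.prems S q by simp
    have h2: "hd ws2 = cs ! c" unfolding ws2_def using q c by (simp add: hd_drop_conv_nth)
    have l2: "last ws2 = cs ! b" unfolding ws2_def using q less.prems by simp
    have tri: "cyc_dist ?n a b \<le> cyc_dist ?n a c + cyc_dist ?n c b"
      using less.prems c by (intro cyc_dist_tri) auto
    have len: "real (length ws2 - 1) = real (length ws - 1) - real q"
      unfolding ws2_def using q by simp
    have "real (length ws2 - 1) < cyc_dist ?n c b" using len tri False less.prems by linarith
    moreover have "length ws2 < length ws" unfolding ws2_def using q by simp
    ultimately obtain a' b' ws' where sh: "strict_shortcut G S cs a' b' ws'"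
      and bd: "cyc_dist ?n c a' + real (length ws' - 1) \<le> real (length ws2 - 1)"
      using less.hyps[of ws2 c] w2 h2 l2 c less.prems by blast
    have "a' < ?n" using sh unfolding strict_shortcut_def by simp
    then have "cyc_dist ?n a a' \<le> cyc_dist ?n a c + cyc_dist ?n c a'"
      using less.prems c by (intro cyc_dist_tri) auto
    then have "cyc_dist ?n a a' + real (length ws' - 1) \<le> real (length ws - 1)"
      using bd len False by linarith
    then show ?thesis using sh by blast
  qed
qed

end



context group begin

lemma word_prod_single: "x \<in> carrier G \<Longrightarrow> word_prod G [x] = x"
  by (simp add: word_prod_def)

lemma dir1:
  assumes S: "S \<subseteq> carrier G" and ep: "\<epsilon> > 0" and dc: "dense_chordal G S \<epsilon> k m"
  shows "group_chordal G S (nat \<lceil>2 * \<epsilon>\<rceil> + 1) k m"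
  unfolding group_chordal_def
proof (intro allI impI)
  fix ss assume a: "simple_relation G S ss \<and> k \<le> length ss"
  define n where "n = length ss"
  have n3: "n > 2" using a unfolding simple_relation_def n_def by simp
  have ssS: "set ss \<subseteq> sym_gens G S" using a unfolding simple_relation_def by simp
  then have ssc: "set ss \<subseteq> carrier G" using sym_gens_carrier[OF S] by auto
  have simp_rel: "\<And>p q. 1 \<le> p \<Longrightarrow> p \<le> q \<Longrightarrow> q \<le> n \<Longrightarrow>
        (word_prod G (subword ss p q) = \<one>) = (p = 1 \<and> q = n)"
    using a unfolding simple_relation_def n_def by blast
  define g where "g l = word_prod G (take l ss)" for l
  have gc: "g l \<in> carrier G" for l unfolding g_def using ssc
    by (intro word_prod_carrier) (meson order_trans set_take_subset)
  have gsplit: "g b = g a \<otimes> word_prod G (subword ss (a+1) b)" if "a \<le> b" for a b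
  proof -
    have "take b ss = take a ss @ take (b - a) (drop a ss)"
      using that by (metis le_add_diff_inverse take_add)
    moreover have "set (take a ss) \<subseteq> carrier G" "set (take (b - a) (drop a ss)) \<subseteq> carrier G"
      using ssc by (meson order_trans set_take_subset set_drop_subset)+
    ultimately show ?thesis unfolding g_def subword_def
      by (simp add: word_prod_append)
  qed
  have gn: "g n = \<one>"
  proof -
    have "word_prod G (subword ss 1 n) = \<one>" using simp_rel[of 1 n] n3 by simp
    then show ?thesis unfolding g_def subword_def n_def by simp
  qed
  have gsuc: "g (Suc l) = g l \<otimes> ss ! l" if "l < n" for l
  proof -
    have "take (Suc l) ss = take l ss @ [ss ! l]" using that n_def by (simp add: take_Suc_conv_app_nth)
    moreover have "ss ! l \<in> carrier G" using ssc that n_def by auto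
    moreover have "set (take l ss) \<subseteq> carrier G" using ssc by (meson order_trans set_take_subset)
    ultimately show ?thesis unfolding g_def by (simp add: word_prod_append word_prod_single)
  qed
  have ginj: "g a \<noteq> g b" if "a < b" "b < n" for a b
  proof
    assume e: "g a = g b"
    have "g b = g a \<otimes> word_prod G (subword ss (a+1) b)" using gsplit that by simp
    moreover have "word_prod G (subword ss (a+1) b) \<in> carrier G"
      using ssc unfolding subword_def
      by (meson word_prod_carrier order_trans set_drop_subset set_take_subset)
    ultimately have "word_prod G (subword ss (a+1) b) = \<one>" using e gc l_cancel_one' by metis
    then show False using simp_rel[of "a+1" b] that by simp
  qed
  define cs where "cs = map g [0..<n]"
  have lcs: "length cs = n" unfolding cs_def by simp
  have cyc: "cay_cycle G S cs"
    unfolding cay_cycle_def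
  proof (intro conjI allI impI)
    show "3 \<le> length cs" using lcs n3 by simp
    show "distinct cs" unfolding cs_def distinct_conv_nth
      using ginj by (auto simp: nat_neq_iff) (metis ginj)
    fix i assume i: "i < length cs"
    have si: "ss ! i \<in> sym_gens G S" using ssS i lcs n_def nth_mem by (metis subsetD)
    show "cay_adj G S (cs ! i) (cs ! ((i + 1) mod length cs))"
    proof (cases "i + 1 < n")
      case True
      then show ?thesis unfolding cay_adj_def cs_def using gc gsuc[of i] si i lcs by auto
    next
      case False
      then have "i = n - 1" using i lcs by simp
      then have "(i + 1) mod length cs = 0" "g (Suc i) = \<one>" using lcs n3 gn by auto
      moreover have "g 0 = \<one>" unfolding g_def by (simp add: word_prod_def)
      moreover have "cs ! 0 = g 0" "cs ! i = g i" using n3 i lcs unfolding cs_def by auto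
      ultimately have "cs ! ((i + 1) mod length cs) = cs ! i \<otimes> ss ! i"
        using gsuc[of i] i lcs by simp
      then show ?thesis unfolding cay_adj_def using gc[of i] si \<open>cs ! i = g i\<close> by auto
    qed
  qed
  define t where "t = (if \<epsilon> < real n then \<epsilon> else 0)"
  have t: "0 \<le> t" "t < real n" using ep n3 unfolding t_def by auto
  obtain c d ws where sh: "strict_shortcut G S cs c d ws" and lm: "length ws - 1 \<le> m"
      and near: "cyc_dist n t (real c) < \<epsilon> \<or> cyc_dist n t (real d) < \<epsilon>"
  proof -
    have "k \<le> length cs" using a lcs n_def by simp
    then have "\<exists>i j ws. strict_shortcut G S cs i j ws \<and> length ws - 1 \<le> m \<and>
          (cyc_dist (length cs) t (real i) < \<epsilon> \<or> cyc_dist (length cs) t (real j) < \<epsilon>)"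
    proof -
      have "\<forall>t. 0 \<le> t \<and> t < real (length cs) \<longrightarrow> (\<exists>i j ws. strict_shortcut G S cs i j ws \<and> length ws - 1 \<le> m \<and>
          (cyc_dist (length cs) t (real i) < \<epsilon> \<or> cyc_dist (length cs) t (real j) < \<epsilon>))"
        using dc cyc \<open>k \<le> length cs\<close> unfolding dense_chordal_def by blast
      then show ?thesis using t lcs by blast
    qed
    then show ?thesis using that lcs by blast
  qed
  have near2: "real x < 2 * \<epsilon>" if "x < n" "cyc_dist n t (real x) < \<epsilon>" for x
    using that ep unfolding t_def cyc_dist_def by (auto split: if_splits simp: min_def abs_if)
  have key: "\<exists>i j ss'. 1 \<le> i \<and> i \<le> nat \<lceil>2 * \<epsilon>\<rceil> + 1 \<and> i < j \<and> j \<le> length ss \<and>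
           set ss' \<subseteq> sym_gens G S \<and>
           word_prod G (subword ss i j) = word_prod G ss' \<and>
           length ss' \<le> m \<and> length ss' \<le> j - i \<and>
           int (length ss') \<le> int (length ss) - int j + int i - 2"
    if w: "cay_walk G S ws1" and lo: "lo < hi" "hi < n" "real lo < 2 * \<epsilon>"
      and hd: "hd ws1 = cs ! lo" and lt: "last ws1 = cs ! hi"
      and L: "real (length ws1 - 1) < cyc_dist n lo hi" and Lm: "length ws1 - 1 \<le> m" for ws1 lo hi
  proof -
    define ss' where "ss' = labels ws1"
    note lp = labels_prop[OF w S]
    have cd: "cyc_dist n lo hi = real (min (hi - lo) (n - (hi - lo)))"
      using lo unfolding cyc_dist_def by (auto simp: min_def of_nat_diff)
    have L1: "length ss' \<le> hi - (lo + 1)" "length ss' + 1 + (hi - lo) \<le> n"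
    proof -
      have "real (length ws1 - 1) < real (min (hi - lo) (n - (hi - lo)))" using L cd by simp
      then have "length ws1 - 1 < min (hi - lo) (n - (hi - lo))" by linarith
      then have "length ws1 - 1 < hi - lo" "length ws1 - 1 < n - (hi - lo)" by simp_all
      then show "length ss' \<le> hi - (lo + 1)" "length ss' + 1 + (hi - lo) \<le> n"
        using lp(2) lo unfolding ss'_def by linarith+
    qed
    have "word_prod G (subword ss (lo + 1) hi) = inv (g lo) \<otimes> g hi"
    proof -
      have wc: "word_prod G (subword ss (lo + 1) hi) \<in> carrier G"
        using ssc unfolding subword_def
        by (meson word_prod_carrier order_trans set_drop_subset set_take_subset)
      have "g hi = g lo \<otimes> word_prod G (subword ss (lo + 1) hi)" using gsplit[of lo hi] lo by simp
      then show ?thesis using inv_solve_left[OF wc gc gc] by blast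
    qed
    also have "\<dots> = word_prod G ss'" using lp(3) hd lt lo lcs unfolding ss'_def cs_def by simp
    finally have wp: "word_prod G (subword ss (lo + 1) hi) = word_prod G ss'" .
    have "Suc lo < hi"
    proof (rule ccontr)
      assume "\<not> Suc lo < hi"
      then have "length ws1 - 1 = 0" using L1 lp(2) lo unfolding ss'_def by simp
      moreover have "ws1 \<noteq> []" using w by (simp add: cay_walk_def)
      ultimately have "hd ws1 = last ws1" by (cases ws1) auto
      then have "g lo = g hi" using hd lt lo lcs unfolding cs_def by simp
      then show False using ginj lo by blast
    qed
    have "lo + 1 \<le> nat \<lceil>2 * \<epsilon>\<rceil> + 1" using lo(3) by linarith
    then show ?thesis
      using L1 lo wp lp(1,2) Lm \<open>Suc lo < hi\<close> unfolding ss'_def n_def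
      by (intro exI[of _ "lo+1"] exI[of _ hi] exI[of _ "labels ws1"]) auto
  qed
  have shp: "c < n" "d < n" "cay_walk G S ws" "hd ws = cs ! c" "last ws = cs ! d"
    "real (length ws - 1) < cyc_dist n c d"
    using sh lcs unfolding strict_shortcut_def by auto
  have "c \<noteq> d" using shp(6) by (auto simp: cyc_dist_self)
  then consider "c < d" | "d < c" by linarith
  then show "\<exists>i j ss'. 1 \<le> i \<and> i \<le> nat \<lceil>2 * \<epsilon>\<rceil> + 1 \<and> i < j \<and> j \<le> length ss \<and>
           set ss' \<subseteq> sym_gens G S \<and>
           word_prod G (subword ss i j) = word_prod G ss' \<and>
           length ss' \<le> m \<and> length ss' \<le> j - i \<and>
           int (length ss') \<le> int (length ss) - int j + int i - 2"
  proof cases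
    case 1
    have "real c < 2 * \<epsilon>"
      using near near2 shp 1 by (meson less_trans of_nat_less_iff)
    then show ?thesis using key[of ws c d] shp 1 lm by simp
  next
    case 2
    have "real d < 2 * \<epsilon>"
      using near near2 shp 2 by (meson less_trans of_nat_less_iff)
    moreover have "cay_walk G S (rev ws)" using rev_walk shp S by simp
    moreover have "ws \<noteq> []" using shp by (simp add: cay_walk_def)
    ultimately show ?thesis using key[of "rev ws" d c] shp 2 lm
      by (simp add: hd_rev last_rev cyc_dist_sym)
  qed
qed

end



lemma mod_rot_eq:
  fixes x y n r :: nat
  assumes "x < y" "y \<le> n"
  shows "((r + x) mod n = (r + y) mod n) \<longleftrightarrow> (x = 0 \<and> y = n)"
proof
  assume "(r + x) mod n = (r + y) mod n"
  then have "n dvd (r + y) - (r + x)" using assms by (metis mod_eq_dvd_iff_nat add_le_cancel_left less_imp_le)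
  then have "n dvd y - x" by simp
  moreover have "0 < y - x" "y - x \<le> n" using assms by auto
  ultimately have "y - x = n" by (meson dvd_imp_le le_antisym)
  then show "x = 0 \<and> y = n" using assms by auto
qed auto

context group begin

lemma dir2:
  assumes S: "S \<subseteq> carrier G" and gch: "group_chordal G S i0 k m"
  shows "dense_chordal G S (real i0 + real m + 1) k m"
  unfolding dense_chordal_def
proof (intro allI impI)
  fix cs t assume a: "cay_cycle G S cs \<and> k \<le> length cs" and t: "0 \<le> t \<and> t < real (length cs)"
  define n where "n = length cs"
  have n3: "n \<ge> 3" and dcs: "distinct cs"
    and adj: "\<And>i. i < n \<Longrightarrow> cay_adj G S (cs ! i) (cs ! ((i + 1) mod n))"
    using a unfolding cay_cycle_def n_def by auto
  have csc: "\<And>i. i < n \<Longrightarrow> cs ! i \<in> carrier G" using adj unfolding cay_adj_def by blast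
  define r where "r = nat \<lfloor>t\<rfloor>"
  have rn: "r < n" using t unfolding r_def n_def by linarith
  have tr: "\<bar>t - real r\<bar> < 1" using t unfolding r_def by linarith
  define h where "h l = cs ! ((r + l) mod n)" for l
  have hc: "h l \<in> carrier G" for l unfolding h_def using csc n3 by simp
  define f where "f l = inv (h l) \<otimes> h (Suc l)" for l
  define ss where "ss = map f [0..<n]"
  have sub: "subword ss p q = map f [p - 1..<q]" if "1 \<le> p" "p \<le> q" "q \<le> n" for p q
    using that unfolding subword_def ss_def by (simp add: take_map drop_map)
  have wsub: "word_prod G (subword ss p q) = inv (h (p - 1)) \<otimes> h q"
    if "1 \<le> p" "p \<le> q" "q \<le> n" for p q
    using sub[OF that] telescope[of h "p - 1" q] hc that unfolding f_def by simp
  have fS: "f l \<in> sym_gens G S" if "l < n" for l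
  proof -
    have "cay_adj G S (cs ! ((r + l) mod n)) (cs ! (((r + l) mod n + 1) mod n))"
      using adj n3 by simp
    moreover have "((r + l) mod n + 1) mod n = (r + Suc l) mod n" by (simp add: mod_Suc_eq)
    ultimately obtain s where s: "s \<in> sym_gens G S" "h (Suc l) = h l \<otimes> s"
      unfolding cay_adj_def h_def by auto
    have "s \<in> carrier G" using s sym_gens_carrier[OF S] by auto
    then have "f l = s" unfolding f_def using s hc by (simp add: m_assoc[symmetric])
    then show ?thesis using s by simp
  qed
  have srel: "simple_relation G S ss" unfolding simple_relation_def
  proof (intro conjI allI impI)
    show "2 < length ss" using n3 unfolding ss_def by simp
    show "set ss \<subseteq> sym_gens G S" unfolding ss_def using fS by auto
    fix p q assume pq: "1 \<le> p \<and> p \<le> q \<and> q \<le> length ss"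
    then have pq': "1 \<le> p" "p \<le> q" "q \<le> n" unfolding ss_def by auto
    have "(inv (h (p - 1)) \<otimes> h q = \<one>) \<longleftrightarrow> h (p - 1) = h q"
      using hc by (metis inv_solve_left' r_one one_closed)
    also have "\<dots> \<longleftrightarrow> (r + (p - 1)) mod n = (r + q) mod n"
      unfolding h_def using dcs n3 n_def by (intro nth_eq_iff_index_eq) (auto intro: mod_less_divisor)
    also have "\<dots> \<longleftrightarrow> (p - 1 = 0 \<and> q = n)" using pq' by (intro mod_rot_eq) auto
    finally show "(word_prod G (subword ss p q) = \<one>) = (p = 1 \<and> q = length ss)"
      using wsub[OF pq'] pq' unfolding ss_def by auto
  qed
  obtain i j ss' where ij: "1 \<le> i" "i \<le> i0" "i < j" "j \<le> n"
      and ss'S: "set ss' \<subseteq> sym_gens G S"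
      and wp: "word_prod G (subword ss i j) = word_prod G ss'"
      and Lm: "length ss' \<le> m" and Lji: "length ss' \<le> j - i"
      and Lc: "int (length ss') \<le> int n - int j + int i - 2"
    using gch srel a unfolding group_chordal_def ss_def n_def by auto
  define L where "L = length ss'"
  have ss'c: "set ss' \<subseteq> carrier G" using ss'S sym_gens_carrier[OF S] by auto
  have wp2: "word_prod G ss' = inv (h (i - 1)) \<otimes> h j" using wp wsub[of i j] ij by simp
  define w where "w l = h (i - 1) \<otimes> word_prod G (take l ss')" for l
  have wc: "w l \<in> carrier G" for l unfolding w_def using hc ss'c
    by (meson m_closed word_prod_carrier order_trans set_take_subset)
  define ws where "ws = map w [0..<Suc L]"
  have wsuc: "w (Suc l) = w l \<otimes> ss' ! l" if "l < L" for l
  proof -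
    have "take (Suc l) ss' = take l ss' @ [ss' ! l]" using that L_def by (simp add: take_Suc_conv_app_nth)
    moreover have "ss' ! l \<in> carrier G" using ss'c that L_def by auto
    moreover have "set (take l ss') \<subseteq> carrier G" using ss'c by (meson order_trans set_take_subset)
    ultimately show ?thesis unfolding w_def using hc
      by (simp add: word_prod_append word_prod_single m_assoc word_prod_carrier)
  qed
  have walk: "cay_walk G S ws" unfolding cay_walk_def
  proof (intro conjI allI impI)
    show "ws \<noteq> []" unfolding ws_def by simp
    show "hd ws \<in> carrier G" unfolding ws_def using wc by (simp del: upt_Suc add: upt_conv_Cons)
    fix l assume l: "l + 1 < length ws"
    then have "l < L" unfolding ws_def by simp
    moreover have "ss' ! l \<in> sym_gens G S" using ss'S \<open>l < L\<close> L_def nth_mem by blast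
    ultimately show "cay_adj G S (ws ! l) (ws ! (l + 1))"
      unfolding cay_adj_def ws_def using wc wsuc
      by (auto simp del: upt_Suc simp add: nth_map_upt)
  qed
  have hdw: "hd ws = h (i - 1)" unfolding ws_def w_def using hc by (simp del: upt_Suc add: upt_conv_Cons word_prod_def)
  have lw: "last ws = h j" unfolding ws_def w_def using hc wp2 L_def
    by (simp add: m_assoc[symmetric])
  define D where "D = j - (i - 1)"
  have D: "D < n" "0 < D" "r + (i - 1) + D = r + j" using Lc ij unfolding D_def by auto
  define a0 where "a0 = (r + (i - 1)) mod n"
  define b0 where "b0 = (r + (i - 1) + D) mod n"
  have ab: "a0 < n" "b0 < n" "cs ! a0 = h (i - 1)" "cs ! b0 = h j"
    unfolding a0_def b0_def h_def using n3 D by (auto simp: add.assoc)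
  have cd: "cyc_dist n a0 b0 = real (min D (n - D))"
    unfolding a0_def b0_def using cyc_dist_rot[OF D(1)] by simp
  have "L < min D (n - D)" using Lji Lc ij unfolding L_def D_def by auto
  then have Lt: "real (length ws - 1) < cyc_dist n a0 b0" unfolding ws_def cd by simp
  obtain a' b' ws' where sh: "strict_shortcut G S cs a' b' ws'"
    and bd: "cyc_dist n a0 a' + real (length ws' - 1) \<le> real (length ws - 1)"
    using extract_sc[OF S dcs walk, of a0 b0] ab hdw lw Lt n_def by auto
  have a'n: "a' < n" using sh unfolding strict_shortcut_def n_def by simp
  have "cyc_dist n (real r) (real a0) = real (min (i - 1) (n - (i - 1)))"
    unfolding a0_def using cyc_dist_rot[of "i - 1" n r 0] ij D rn by simp
  then have cra: "cyc_dist n (real r) (real a0) \<le> real (i - 1)" by simp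
  have ctr: "cyc_dist n t (real r) < 1" using tr cyc_dist_le_abs[of n t "real r"] by linarith
  have "cyc_dist n t (real a') \<le> cyc_dist n t (real r) + cyc_dist n (real r) (real a')"
    using t rn a'n n_def by (intro cyc_dist_tri) auto
  moreover have "cyc_dist n (real r) (real a') \<le> cyc_dist n (real r) (real a0) + cyc_dist n (real a0) (real a')"
    using rn a'n ab by (intro cyc_dist_tri) auto
  moreover have "real (length ws - 1) \<le> real m" using Lm unfolding ws_def L_def by simp
  moreover have "real (i - 1) + 1 \<le> real i0" using ij by linarith
  moreover have nn: "0 \<le> cyc_dist n (real a0) (real a')"
    using ab a'n unfolding cyc_dist_def by (auto simp: abs_if)
  ultimately have "cyc_dist n t (real a') < real i0 + real m + 1"
    using ctr cra bd by linarith
  moreover have "length ws' - 1 \<le> m"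
  proof -
    have "real (length ws' - 1) \<le> real m" using bd nn \<open>real (length ws - 1) \<le> real m\<close> by linarith
    then show ?thesis by simp
  qed
  ultimately show "\<exists>i j ws. strict_shortcut G S cs i j ws \<and> length ws - 1 \<le> m \<and>
     (cyc_dist (length cs) t (real i) < real i0 + real m + 1 \<or>
      cyc_dist (length cs) t (real j) < real i0 + real m + 1)"
    using sh n_def by blast
qed

end

theorem theorem9:
  fixes G :: "('a, 'b) monoid_scheme" and S :: "'a set" and k m :: nat
  assumes "group G" and "S \<subseteq> carrier G" and "finite S"
    and "generate G S = carrier G"
    and "k > 0" and "m > 0"
  shows "(\<exists>\<epsilon>::real. \<epsilon> > 0 \<and> dense_chordal G S \<epsilon> k m) \<longleftrightarrow>
         (\<exists>i0::nat. i0 > 0 \<and> group_chordal G S i0 k m)"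
proof
  assume "\<exists>\<epsilon>::real. \<epsilon> > 0 \<and> dense_chordal G S \<epsilon> k m"
  then obtain \<epsilon> :: real where e1: "\<epsilon> > 0" and e2: "dense_chordal G S \<epsilon> k m" by blast
  have "group_chordal G S (nat \<lceil>2 * \<epsilon>\<rceil> + 1) k m"
    by (rule group.dir1[OF assms(1) assms(2) e1 e2])
  then show "\<exists>i0::nat. i0 > 0 \<and> group_chordal G S i0 k m"
    by (intro exI[of _ "nat \<lceil>2 * \<epsilon>\<rceil> + 1"]) simp
next
  assume "\<exists>i0::nat. i0 > 0 \<and> group_chordal G S i0 k m"
  then obtain i0 where g: "group_chordal G S i0 k m" by blast
  have "dense_chordal G S (real i0 + real m + 1) k m"
    by (rule group.dir2[OF assms(1) assms(2) g])
  then show "\<exists>\<epsilon>::real. \<epsilon> > 0 \<and> dense_chordal G S \<epsilon> k m"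
    by (intro exI[of _ "real i0 + real m + 1"]) simp
qed

end
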